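(* Let $W$ be an entanglement witness on $\mathbb{C}^m\otimes\mathbb{C}^n$. Then $W^+$ is either an entanglement witness or positive semidefinite (a state, up to normalization). Specifically: (i) $W^+$ is an entanglement witness if and only if $W$ detects a real entangled state; (ii) $W^+$ is a PPT state if and only if $W$ detects no real entangled state and $W^\Gamma$ is either an NPT state or an entanglement witness detecting no real entangled state; (iii) $W^+$ is an NPT state if and only if $W$ detects no real entangled state and $W^\Gamma$ is an entanglement witness detecting at least one real entangled state. Moreover, if $W^+$ is an NPT state, then every real entangled state detected by $W^\Gamma$ is NPT.
   Context: An entanglement witness on $\mathbb{C}^m\otimes\mathbb{C}^n$ is a Hermitian matrix $W$ with $\mathrm{tr}(W\sigma)\ge0$ for all separable states $\sigma$ and $\mathrm{tr}(W\sigma)<0$ for at least one entangled state; $W$ detects $\rho$ if $\mathrm{tr}(W\rho)<0$. A real state is one whose density matrix has real entries. $W^+=\frac12(W+W^* )$ where $W^*$ is the entrywise complex conjugate; $M^\Gamma$ is the partial transpose with respect to the first subsystem. A (possibly unnormalized) positive semidefinite $\rho$ is PPT if $\rho^\Gamma\ge0$ and NPT otherwise. *)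

theory Defs
  imports "HOL-Analysis.Analysis"
begin

text \<open>Operators on C^m tensor C^n are matrices indexed by pairs (i,j) with i ranging over
  the finite type 'm (first subsystem, dimension CARD('m)) and j over 'n (second subsystem).\<close>

type_synonym ('m, 'n) bop = "complex ^ ('m \<times> 'n) ^ ('m \<times> 'n)"

definition mtrace :: "complex ^ 'k ^ 'k \<Rightarrow> complex" where
  "mtrace A = (\<Sum>i\<in>UNIV. A $ i $ i)"

definition hermitian :: "complex ^ 'k ^ 'k \<Rightarrow> bool" where
  "hermitian A \<longleftrightarrow> (\<forall>i j. A $ i $ j = cnj (A $ j $ i))"

definition psd :: "complex ^ 'k ^ 'k \<Rightarrow> bool" where
  "psd A \<longleftrightarrow> hermitian A \<and>
     (\<forall>v :: complex ^ 'k. 0 \<le> Re (\<Sum>i\<in>UNIV. \<Sum>j\<in>UNIV. cnj (v $ i) * A $ i $ j * v $ j))"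

definition is_state :: "complex ^ 'k ^ 'k \<Rightarrow> bool" where
  "is_state A \<longleftrightarrow> psd A \<and> mtrace A = 1"

definition kron :: "complex ^ 'm ^ 'm \<Rightarrow> complex ^ 'n ^ 'n \<Rightarrow> ('m, 'n) bop" where
  "kron A B = (\<chi> r. \<chi> c. A $ fst r $ fst c * B $ snd r $ snd c)"

definition separable :: "('m::finite, 'n::finite) bop \<Rightarrow> bool" where
  "separable \<sigma> \<longleftrightarrow> (\<exists>(K::nat) (p :: nat \<Rightarrow> real) (A :: nat \<Rightarrow> complex ^ 'm ^ 'm)
        (B :: nat \<Rightarrow> complex ^ 'n ^ 'n).
      (\<forall>k<K. 0 \<le> p k \<and> is_state (A k) \<and> is_state (B k)) \<and>
      (\<Sum>k<K. p k) = 1 \<and>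
      \<sigma> = (\<Sum>k<K. p k *\<^sub>R kron (A k) (B k)))"

definition entangled :: "('m::finite, 'n::finite) bop \<Rightarrow> bool" where
  "entangled \<rho> \<longleftrightarrow> is_state \<rho> \<and> \<not> separable \<rho>"

text \<open>W detects rho: tr(W rho) < 0 (the trace is real for Hermitian W and rho).\<close>
definition detects :: "('m::finite, 'n::finite) bop \<Rightarrow> ('m, 'n) bop \<Rightarrow> bool" where
  "detects W \<rho> \<longleftrightarrow> Re (mtrace (W ** \<rho>)) < 0"

definition ent_witness :: "('m::finite, 'n::finite) bop \<Rightarrow> bool" where
  "ent_witness W \<longleftrightarrow> hermitian W \<and>
     (\<forall>\<sigma>. is_state \<sigma> \<and> separable \<sigma> \<longrightarrow> 0 \<le> Re (mtrace (W ** \<sigma>))) \<and>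
     (\<exists>\<rho>. entangled \<rho> \<and> detects W \<rho>)"

definition real_mat :: "complex ^ 'k ^ 'k \<Rightarrow> bool" where
  "real_mat A \<longleftrightarrow> (\<forall>i j. A $ i $ j \<in> \<real>)"

definition mconj :: "complex ^ 'k ^ 'k \<Rightarrow> complex ^ 'k ^ 'k" where
  "mconj A = (\<chi> i. \<chi> j. cnj (A $ i $ j))"

definition realpart :: "complex ^ 'k ^ 'k \<Rightarrow> complex ^ 'k ^ 'k" where
  "realpart A = (1/2 :: real) *\<^sub>R (A + mconj A)"

definition ptrans :: "('m::finite, 'n::finite) bop \<Rightarrow> ('m, 'n) bop" where
  "ptrans A = (\<chi> r. \<chi> c. A $ (fst c, snd r) $ (fst r, snd c))"

text \<open>PPT / NPT for possibly unnormalized positive semidefinite operators.\<close>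
definition PPT :: "('m::finite, 'n::finite) bop \<Rightarrow> bool" where
  "PPT \<rho> \<longleftrightarrow> psd \<rho> \<and> psd (ptrans \<rho>)"

definition NPT :: "('m::finite, 'n::finite) bop \<Rightarrow> bool" where
  "NPT \<rho> \<longleftrightarrow> psd \<rho> \<and> \<not> psd (ptrans \<rho>)"

definition detects_real_ent :: "('m::finite, 'n::finite) bop \<Rightarrow> bool" where
  "detects_real_ent W \<longleftrightarrow> (\<exists>\<rho>. real_mat \<rho> \<and> entangled \<rho> \<and> detects W \<rho>)"

end

theory Submission
  imports Defs
begin

definition qf :: "complex ^ 'k::finite ^ 'k \<Rightarrow> complex ^ 'k \<Rightarrow> complex ^ 'k \<Rightarrow> complex" where
  "qf A x y = (\<Sum>i\<in>UNIV. \<Sum>j\<in>UNIV. cnj (x $ i) * A $ i $ j * y $ j)"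

lemma psd_qf: "psd A \<longleftrightarrow> hermitian A \<and> (\<forall>v. 0 \<le> Re (qf A v v))"
  by (simp add: psd_def qf_def)

lemma qf_lin_left: "qf A (\<chi> i. x$i + c * y$i) z = qf A x z + cnj c * qf A y z"
  by (simp add: qf_def algebra_simps sum.distrib sum_distrib_left)

lemma qf_lin_right: "qf A z (\<chi> i. x$i + c * y$i) = qf A z x + c * qf A z y"
  by (simp add: qf_def algebra_simps sum.distrib sum_distrib_left)

lemma sum_delta_l: "(\<Sum>i\<in>(UNIV::'k::finite set). (if i = k then (1::complex) else 0) * f i) = f k"
  by (simp add: if_distrib[where f="\<lambda>t. t * _"] sum.delta cong: if_cong)
lemma sum_delta_r: "(\<Sum>i\<in>(UNIV::'k::finite set). f i * (if i = k then (1::complex) else 0)) = f k"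
  by (simp add: if_distrib[where f="\<lambda>t. _ * t"] sum.delta cong: if_cong)

lemma qf_e_left: "qf A (\<chi> i. if i = k then 1 else 0) z = (\<Sum>j\<in>UNIV. A$k$j * z$j)"
proof -
  have "qf A (\<chi> i. if i = k then 1 else 0) z = (\<Sum>i\<in>UNIV. (if i = k then 1 else 0) * (\<Sum>j\<in>UNIV. A$i$j * z$j))"
    unfolding qf_def by (simp add: sum_distrib_left mult.assoc if_distrib[where f=cnj] cong: if_cong)
  also have "\<dots> = (\<Sum>j\<in>UNIV. A$k$j * z$j)" by (rule sum_delta_l)
  finally show ?thesis .
qed

lemma qf_e_right: "qf A z (\<chi> i. if i = k then 1 else 0) = (\<Sum>i\<in>UNIV. cnj (z$i) * A$i$k)"
  unfolding qf_def by (simp add: sum_delta_r)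

lemma herm_diag_real: "hermitian A \<Longrightarrow> A$k$k = complex_of_real (Re (A$k$k))"
  unfolding hermitian_def by (metis Reals_cnj_iff complex_is_Real_iff of_real_Re)

lemma psd_diag: "hermitian A \<Longrightarrow> (\<forall>v. 0 \<le> Re (qf A v v)) \<Longrightarrow> 0 \<le> Re (A$k$k)"
proof -
  assume "\<forall>v. 0 \<le> Re (qf A v v)"
  hence "0 \<le> Re (qf A (\<chi> i. if i = k then 1 else 0) (\<chi> i. if i = k then 1 else 0))" by blast
  thus ?thesis by (simp only: qf_e_left vec_lambda_beta sum_delta_r)
qed

lemma qf_ee: "qf A (\<chi> i. if i = a then 1 else 0) (\<chi> i. if i = b then 1 else 0) = A$a$b"
  by (simp only: qf_e_left vec_lambda_beta sum_delta_r)

lemma psd_offdiag_zero: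
  assumes h: "hermitian A" and p: "\<forall>v. 0 \<le> Re (qf A v v)" and z: "A$k$k = 0"
  shows "A$k$j = 0"
proof (rule ccontr)
  assume nz: "A$k$j \<noteq> 0"
  define ej :: "complex^'a" where "ej = (\<chi> i. if i = j then 1 else 0)"
  define ek :: "complex^'a" where "ek = (\<chi> i. if i = k then 1 else 0)"
  define n where "n = (cmod (A$k$j))^2"
  have npos: "n > 0" using nz by (simp add: n_def)
  define r :: real where "r = (\<bar>Re (A$j$j)\<bar> + 1) / (2 * n)"
  define c where "c = - complex_of_real r * A$k$j"
  have hjk: "A$j$k = cnj (A$k$j)" using h unfolding hermitian_def by blast
  have "qf A (\<chi> i. ej$i + c * ek$i) (\<chi> i. ej$i + c * ek$i)
      = A$j$j + c * A$j$k + cnj c * A$k$j + cnj c * c * A$k$k"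
    by (simp only: qf_lin_left qf_lin_right ej_def ek_def qf_ee) (simp add: algebra_simps)
  also have "\<dots> = A$j$j - 2 * complex_of_real r * (A$k$j * cnj (A$k$j))"
    unfolding c_def hjk z by (simp add: ring_distribs mult_ac)
  also have "\<dots> = A$j$j - 2 * complex_of_real r * complex_of_real n"
    by (simp only: n_def complex_norm_square)
  finally have "qf A (\<chi> i. ej$i + c * ek$i) (\<chi> i. ej$i + c * ek$i) = A$j$j - 2 * complex_of_real r * complex_of_real n" .
  hence "Re (qf A (\<chi> i. ej$i + c * ek$i) (\<chi> i. ej$i + c * ek$i)) = Re (A$j$j) - 2 * r * n"
    by simp
  moreover have "2 * r * n = \<bar>Re (A$j$j)\<bar> + 1" using npos by (simp add: r_def)
  ultimately have "Re (qf A (\<chi> i. ej$i + c * ek$i) (\<chi> i. ej$i + c * ek$i)) < 0" by linarith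
  thus False using p by (meson not_le)
qed

lemma herm_ik: "hermitian A \<Longrightarrow> A$i$k = cnj (A$k$i)"
  unfolding hermitian_def by blast

lemma psd_factor_aux:
  fixes S :: "'k::finite set"
  assumes "finite S"
  shows "\<forall>A::complex^'k^'k. hermitian A \<and> (\<forall>v. 0 \<le> Re (qf A v v)) \<and>
     (\<forall>i j. i \<notin> S \<or> j \<notin> S \<longrightarrow> A$i$j = 0) \<longrightarrow>
     (\<exists>(N::nat) L. \<forall>i j. A$i$j = (\<Sum>t<N. cnj (L t $ i) * L t $ j))"
  using assms
proof (induction S rule: finite_induct)
  case empty
  show ?case
  proof (intro allI impI)
    fix A :: "complex^'k^'k"
    assume "hermitian A \<and> (\<forall>v. 0 \<le> Re (qf A v v)) \<and> (\<forall>i j. i \<notin> {} \<or> j \<notin> {} \<longrightarrow> A$i$j = 0)"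
    hence "\<forall>i j. A$i$j = 0" by simp
    thus "\<exists>(N::nat) L. \<forall>i j. A$i$j = (\<Sum>t<N. cnj (L t $ i) * L t $ j)"
      by (intro exI[of _ "0::nat"] exI[of _ "\<lambda>_. 0::complex^'k"]) simp
  qed
next
  case (insert k S)
  show ?case
  proof (intro allI impI)
    fix A :: "complex^'k^'k"
    assume asm: "hermitian A \<and> (\<forall>v. 0 \<le> Re (qf A v v)) \<and>
     (\<forall>i j. i \<notin> insert k S \<or> j \<notin> insert k S \<longrightarrow> A$i$j = 0)"
    hence h: "hermitian A" and p: "\<forall>v. 0 \<le> Re (qf A v v)"
      and sup: "\<forall>i j. i \<notin> insert k S \<or> j \<notin> insert k S \<longrightarrow> A$i$j = 0" by auto
    show "\<exists>(N::nat) L. \<forall>i j. A$i$j = (\<Sum>t<N. cnj (L t $ i) * L t $ j)"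
    proof (cases "A$k$k = 0")
      case True
      have row: "A$k$j = 0" for j using psd_offdiag_zero[OF h p True] .
      have col: "A$i$k = 0" for i using herm_ik[OF h, of i k] row by simp
      have "\<forall>i j. i \<notin> S \<or> j \<notin> S \<longrightarrow> A$i$j = 0"
        using sup row col by (metis insert_iff)
      thus ?thesis using insert.IH h p by blast
    next
      case False
      define a where "a = Re (A$k$k)"
      have akk: "A$k$k = complex_of_real a" using herm_diag_real[OF h] by (simp add: a_def)
      have "0 \<le> a" using psd_diag[OF h p] by (simp add: a_def)
      hence apos: "a > 0" using False akk by force
      define l :: "complex^'k" where "l = (\<chi> j. A$k$j / complex_of_real (sqrt a))"
      define A' :: "complex^'k^'k" where "A' = (\<chi> i. \<chi> j. A$i$j - cnj (l$i) * l$j)"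
      have lprod: "cnj (l$i) * l$j = A$i$k * A$k$j / complex_of_real a" for i j
      proof -
        have sq: "complex_of_real (sqrt a) * complex_of_real (sqrt a) = complex_of_real a"
          using apos by (simp flip: of_real_mult)
        have "cnj (l$i) * l$j = cnj (A$k$i) * A$k$j / (complex_of_real (sqrt a) * complex_of_real (sqrt a))"
          by (simp add: l_def)
        thus ?thesis using herm_ik[OF h, of i k] sq by simp
      qed
      have hA': "hermitian A'"
        unfolding hermitian_def
      proof (intro allI)
        fix i j
        have e1: "cnj (A$j$i) = A$i$j" and e2: "cnj (A$j$k) = A$k$j" and e3: "cnj (A$k$i) = A$i$k"
          using herm_ik[OF h, of i j] herm_ik[OF h, of k j] herm_ik[OF h, of i k] by simp_all
        show "A'$i$j = cnj (A'$j$i)"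
          by (simp add: A'_def lprod e1 e2 e3 mult.commute)
      qed
      have supA': "\<forall>i j. i \<notin> S \<or> j \<notin> S \<longrightarrow> A'$i$j = 0"
      proof (intro allI impI)
        fix i j assume ij: "i \<notin> S \<or> j \<notin> S"
        show "A'$i$j = 0"
        proof (cases "i = k \<or> j = k")
          case True
          then show ?thesis using False akk by (auto simp: A'_def lprod)
        next
          case F: False
          hence "i \<notin> insert k S \<or> j \<notin> insert k S" using ij by auto
          hence "A$i$j = 0" "A$i$k = 0 \<or> A$k$j = 0" using sup by auto
          thus ?thesis by (auto simp: A'_def lprod)
        qed
      qed
      have pA': "\<forall>v. 0 \<le> Re (qf A' v v)"
      proof
        fix x :: "complex^'k"
        define s where "s = (\<Sum>j\<in>UNIV. A$k$j * x$j)"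
        define e :: "complex^'k" where "e = (\<chi> i. if i = k then 1 else 0)"
        define c where "c = s / complex_of_real a"
        have cs: "(\<Sum>i\<in>UNIV. cnj (x$i) * A$i$k) = cnj s"
        proof -
          have "(\<Sum>i\<in>UNIV. cnj (x$i) * A$i$k) = (\<Sum>i\<in>UNIV. cnj (x$i) * cnj (A$k$i))"
            by (rule sum.cong[OF refl]) (metis herm_ik[OF h])
          thus ?thesis by (simp add: s_def mult.commute)
        qed
        have q1: "qf A' x x = qf A x x - (\<Sum>i\<in>UNIV. \<Sum>j\<in>UNIV. cnj (x$i) * (A$i$k * A$k$j / complex_of_real a) * x$j)"
        proof -
          have A'e: "A'$i$j = A$i$j - A$i$k * A$k$j / complex_of_real a" for i j
            by (simp add: A'_def lprod)
          show ?thesis unfolding qf_def A'e by (simp add: algebra_simps sum_subtractf)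
        qed
        have q2: "(\<Sum>i\<in>UNIV. \<Sum>j\<in>UNIV. cnj (x$i) * (A$i$k * A$k$j / complex_of_real a) * x$j)
            = (\<Sum>i\<in>UNIV. cnj (x$i) * A$i$k) * (\<Sum>j\<in>UNIV. A$k$j * x$j) / complex_of_real a"
          by (simp only: sum_product sum_divide_distrib) (simp add: mult_ac)
        have q3: "qf A (\<chi> i. x$i + (-c) * e$i) (\<chi> i. x$i + (-c) * e$i)
           = qf A x x + (-c) * qf A x e + cnj (-c) * (qf A e x + (-c) * qf A e e)"
          by (simp only: qf_lin_left qf_lin_right) (simp add: algebra_simps)
        have "qf A x e = cnj s" unfolding e_def qf_e_right using cs .
        moreover have "qf A e x = s" unfolding e_def qf_e_left s_def ..
        moreover have "qf A e e = complex_of_real a" unfolding e_def qf_ee using akk .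
        ultimately have "qf A (\<chi> i. x$i + (-c) * e$i) (\<chi> i. x$i + (-c) * e$i) = qf A' x x"
        proof -
          assume e1: "qf A x e = cnj s" and e2: "qf A e x = s" and e3: "qf A e e = complex_of_real a"
          have cc: "cnj c = cnj s / complex_of_real a" by (simp add: c_def)
          have an: "complex_of_real a \<noteq> 0" using apos by simp
          show ?thesis unfolding q3 q1 q2 e1 e2 e3 cs s_def[symmetric] complex_cnj_minus cc
            using an by (simp add: c_def field_simps)
        qed
        thus "0 \<le> Re (qf A' x x)" using p by metis
      qed
      obtain N :: nat and L where NL: "\<forall>i j. A'$i$j = (\<Sum>t<N. cnj (L t $ i) * L t $ j)"
        using insert.IH hA' pA' supA' by blast
      show ?thesis
      proof (intro exI allI)
        fix i j
        have "A$i$j = A'$i$j + cnj (l$i) * l$j" by (simp add: A'_def)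
        also have "\<dots> = (\<Sum>t<N. cnj ((L(N := l)) t $ i) * (L(N := l)) t $ j) + cnj ((L(N := l)) N $ i) * (L(N := l)) N $ j"
          using NL by simp
        also have "\<dots> = (\<Sum>t<Suc N. cnj ((L(N := l)) t $ i) * (L(N := l)) t $ j)"
          by simp
        finally show "A$i$j = (\<Sum>t<Suc N. cnj ((L(N := l)) t $ i) * (L(N := l)) t $ j)" .
      qed
    qed
  qed
qed

lemma psd_factor:
  fixes A :: "complex^'k::finite^'k"
  assumes "psd A"
  shows "\<exists>(N::nat) L. \<forall>i j. A$i$j = (\<Sum>t<N. cnj (L t $ i) * L t $ j)"
  using psd_factor_aux[of "UNIV::'k set", OF finite_class.finite_UNIV] assms unfolding psd_qf by blast

lemma sum_pair: "(\<Sum>r\<in>(UNIV::('a::finite \<times> 'b::finite) set). f r) = (\<Sum>a\<in>UNIV. \<Sum>b\<in>UNIV. f (a,b))"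
  unfolding sum.cartesian_product UNIV_Times_UNIV by simp

lemma sum_swap3: "(\<Sum>r\<in>R. \<Sum>c\<in>C. \<Sum>t\<in>T. f r c t) = (\<Sum>t\<in>T. \<Sum>r\<in>R. \<Sum>c\<in>C. f r c t)"
proof -
  have "(\<Sum>r\<in>R. \<Sum>c\<in>C. \<Sum>t\<in>T. f r c t) = (\<Sum>r\<in>R. \<Sum>t\<in>T. \<Sum>c\<in>C. f r c t)"
    by (rule sum.cong[OF refl], rule sum.swap)
  also have "\<dots> = (\<Sum>t\<in>T. \<Sum>r\<in>R. \<Sum>c\<in>C. f r c t)" by (rule sum.swap)
  finally show ?thesis .
qed

lemma sum_perm4: "(\<Sum>a\<in>A. \<Sum>b\<in>B. \<Sum>a'\<in>A'. \<Sum>b'\<in>B'. f a b a' b') = (\<Sum>b\<in>B. \<Sum>b'\<in>B'. \<Sum>a\<in>A. \<Sum>a'\<in>A'. f a b a' b')"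
proof -
  have "(\<Sum>a\<in>A. \<Sum>b\<in>B. \<Sum>a'\<in>A'. \<Sum>b'\<in>B'. f a b a' b') = (\<Sum>b\<in>B. \<Sum>a\<in>A. \<Sum>a'\<in>A'. \<Sum>b'\<in>B'. f a b a' b')"
    by (rule sum.swap)
  also have "\<dots> = (\<Sum>b\<in>B. \<Sum>a\<in>A. \<Sum>b'\<in>B'. \<Sum>a'\<in>A'. f a b a' b')"
    by (rule sum.cong[OF refl], rule sum.cong[OF refl], rule sum.swap)
  also have "\<dots> = (\<Sum>b\<in>B. \<Sum>b'\<in>B'. \<Sum>a\<in>A. \<Sum>a'\<in>A'. f a b a' b')"
    by (rule sum.cong[OF refl], rule sum.swap)
  finally show ?thesis .
qed

lemma hermitian_kron:
  fixes A :: "complex^'a::finite^'a" and B :: "complex^'b::finite^'b"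
  assumes hA: "hermitian A" and hB: "hermitian B"
  shows "hermitian (kron A B)"
  unfolding hermitian_def
proof (intro allI)
  fix r c :: "'a \<times> 'b"
  have e1: "cnj (A$fst c$fst r) = A$fst r$fst c" using herm_ik[OF hA, of "fst r" "fst c"] by simp
  have e2: "cnj (B$snd c$snd r) = B$snd r$snd c" using herm_ik[OF hB, of "snd r" "snd c"] by simp
  show "kron A B $ r $ c = cnj (kron A B $ c $ r)"
    unfolding kron_def by (simp only: vec_lambda_beta complex_cnj_mult e1 e2)
qed

lemma kron_psd:
  fixes A :: "complex^'a::finite^'a" and B :: "complex^'b::finite^'b"
  assumes pA: "psd A" and pB: "psd B"
  shows "psd (kron A B)"
proof -
  obtain N :: nat and L where AL: "\<forall>i j. A$i$j = (\<Sum>t<N. cnj (L t $ i) * L t $ j)"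
    using psd_factor[OF pA] by blast
  have hB: "hermitian B" and qB: "\<forall>v. 0 \<le> Re (qf B v v)" using pB by (auto simp: psd_qf)
  have hA: "hermitian A" using pA by (simp add: psd_qf)
  show ?thesis unfolding psd_qf
  proof (intro conjI allI)
    show "hermitian (kron A B)" using hA hB by (rule hermitian_kron)
    fix v :: "complex^('a\<times>'b)"
    define w where "w t = (\<chi> b. \<Sum>a\<in>UNIV. L t $ a * v $ (a,b))" for t
    define G where "G t r c = cnj (v$r) * cnj (L t $ fst r) * L t $ fst c * B $ snd r $ snd c * v $ c"
      for t and r c :: "'a \<times> 'b"
    have 1: "qf (kron A B) v v = (\<Sum>r\<in>UNIV. \<Sum>c\<in>UNIV. \<Sum>t<N. G t r c)"
      unfolding qf_def kron_def using AL
      by (simp add: sum_distrib_left sum_distrib_right G_def mult_ac)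
    have 2: "\<dots> = (\<Sum>t<N. \<Sum>r\<in>UNIV. \<Sum>c\<in>UNIV. G t r c)" by (rule sum_swap3)
    have 3: "(\<Sum>r\<in>UNIV. \<Sum>c\<in>UNIV. G t r c) = qf B (w t) (w t)" for t
    proof -
      have "(\<Sum>r\<in>UNIV. \<Sum>c\<in>UNIV. G t r c) = (\<Sum>a\<in>UNIV. \<Sum>b\<in>UNIV. \<Sum>a'\<in>UNIV. \<Sum>b'\<in>UNIV. G t (a,b) (a',b'))"
        by (simp only: sum_pair)
      also have "\<dots> = (\<Sum>b\<in>UNIV. \<Sum>b'\<in>UNIV. \<Sum>a\<in>UNIV. \<Sum>a'\<in>UNIV. G t (a,b) (a',b'))"
        by (rule sum_perm4)
      also have "\<dots> = qf B (w t) (w t)"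
        unfolding qf_def w_def by (simp add: sum_distrib_left sum_distrib_right G_def mult_ac)
      finally show ?thesis .
    qed
    have "qf (kron A B) v v = (\<Sum>t<N. qf B (w t) (w t))" using 1 2 3 by simp
    hence "Re (qf (kron A B) v v) = (\<Sum>t<N. Re (qf B (w t) (w t)))" by simp
    also have "\<dots> \<ge> 0" using qB by (intro sum_nonneg) auto
    finally show "0 \<le> Re (qf (kron A B) v v)" .
  qed
qed

lemma mtrace_mult: "mtrace (A ** B) = (\<Sum>i\<in>UNIV. \<Sum>j\<in>UNIV. A$i$j * B$j$i)"
  by (simp add: mtrace_def matrix_matrix_mult_def)

lemma trace_psd:
  fixes M :: "complex^'k::finite^'k"
  assumes pM: "psd M" and pR: "psd R"
  shows "0 \<le> Re (mtrace (M ** R))"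
proof -
  obtain N :: nat and L where RL: "\<forall>i j. R$i$j = (\<Sum>t<N. cnj (L t $ i) * L t $ j)"
    using psd_factor[OF pR] by blast
  have qM: "\<forall>v. 0 \<le> Re (qf M v v)" using pM by (simp add: psd_qf)
  define u where "u t = (\<chi> i. cnj (L t $ i))" for t
  have "mtrace (M ** R) = (\<Sum>i\<in>UNIV. \<Sum>j\<in>UNIV. \<Sum>t<N. L t $ i * M$i$j * cnj (L t $ j))"
    unfolding mtrace_mult using RL by (simp add: sum_distrib_left mult_ac)
  also have "\<dots> = (\<Sum>t<N. \<Sum>i\<in>UNIV. \<Sum>j\<in>UNIV. L t $ i * M$i$j * cnj (L t $ j))"
    by (rule sum_swap3)
  also have "\<dots> = (\<Sum>t<N. qf M (u t) (u t))" by (simp add: qf_def u_def)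
  finally have "Re (mtrace (M ** R)) = (\<Sum>t<N. Re (qf M (u t) (u t)))" by simp
  also have "\<dots> \<ge> 0" using qM by (intro sum_nonneg) auto
  finally show ?thesis .
qed

lemma mtrace_mconj: "mtrace (mconj W ** R) = cnj (mtrace (W ** mconj R))"
  by (simp add: mtrace_mult mconj_def)

lemma realpart_comp: "realpart W $ i $ j = (W$i$j + cnj (W$i$j)) / 2"
  by (simp add: realpart_def mconj_def complex_eq_iff)

lemma tr_realpart: "mtrace (realpart W ** R) = (mtrace (W ** R) + mtrace (mconj W ** R)) / 2"
  unfolding mtrace_mult realpart_comp
  by (simp add: mconj_def algebra_simps sum.distrib sum_divide_distrib add_divide_distrib)

lemma Re_tr_realpart: "Re (mtrace (realpart W ** R)) = (Re (mtrace (W ** R)) + Re (mtrace (W ** mconj R))) / 2"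
  unfolding tr_realpart mtrace_mconj by simp

lemma real_mconj: "real_mat R \<Longrightarrow> mconj R = R"
  unfolding real_mat_def mconj_def by (simp add: vec_eq_iff Reals_cnj_iff)

lemma realpart_real_tr: "real_mat R \<Longrightarrow> Re (mtrace (realpart W ** R)) = Re (mtrace (W ** R))"
  unfolding Re_tr_realpart by (simp add: real_mconj)

lemma qf_mconj: "qf (mconj R) v v = cnj (qf R (\<chi> i. cnj (v$i)) (\<chi> i. cnj (v$i)))"
  by (simp add: qf_def mconj_def)

lemma herm_mconj: assumes h: "hermitian R" shows "hermitian (mconj R)"
  unfolding hermitian_def
proof (intro allI)
  fix i j
  show "mconj R $ i $ j = cnj (mconj R $ j $ i)"
    using herm_ik[OF h, of j i] by (simp add: mconj_def)
qed

lemma state_mconj: "is_state R \<Longrightarrow> is_state (mconj R)"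
proof -
  assume s: "is_state R"
  hence h: "hermitian R" and q: "\<forall>v. 0 \<le> Re (qf R v v)" and t: "mtrace R = 1"
    by (auto simp: is_state_def psd_qf)
  have "hermitian (mconj R)" using h by (rule herm_mconj)
  moreover have "\<forall>v. 0 \<le> Re (qf (mconj R) v v)" using q by (simp add: qf_mconj)
  moreover have "mtrace (mconj R) = 1" using t by (simp add: mtrace_def mconj_def flip: cnj_sum)
  ultimately show ?thesis by (simp add: is_state_def psd_qf)
qed

lemma mconj_kron: "mconj (kron A B) = kron (mconj A) (mconj B)"
  by (simp add: mconj_def kron_def vec_eq_iff)

lemma ptrans_kron:
  fixes A :: "complex^'a::finite^'a" and B :: "complex^'b::finite^'b"
  assumes h: "hermitian A"
  shows "ptrans (kron A B) = kron (mconj A) B"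
proof -
  have e: "cnj (A$fst r$fst c) = A$fst c$fst r" for r c :: "'a \<times> 'b" using herm_ik[OF h, of "fst c" "fst r"] by simp
  show ?thesis by (simp add: ptrans_def mconj_def kron_def vec_eq_iff e)
qed

lemma sum_swap13: "(\<Sum>x\<in>A. \<Sum>b\<in>B. \<Sum>y\<in>A. f x b y) = (\<Sum>x\<in>A. \<Sum>b\<in>B. \<Sum>y\<in>A. f y b x)"
proof -
  have "(\<Sum>x\<in>A. \<Sum>b\<in>B. \<Sum>y\<in>A. f x b y) = (\<Sum>x\<in>A. \<Sum>y\<in>A. \<Sum>b\<in>B. f x b y)"
    by (rule sum.cong[OF refl], rule sum.swap)
  also have "\<dots> = (\<Sum>y\<in>A. \<Sum>x\<in>A. \<Sum>b\<in>B. f x b y)" by (rule sum.swap)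
  also have "\<dots> = (\<Sum>y\<in>A. \<Sum>b\<in>B. \<Sum>x\<in>A. f x b y)"
    by (rule sum.cong[OF refl], rule sum.swap)
  finally show ?thesis .
qed

lemma mtrace_ptrans:
  fixes W R :: "('m::finite, 'n::finite) bop"
  shows "mtrace (ptrans W ** R) = mtrace (W ** ptrans R)"
proof -
  have "mtrace (ptrans W ** R) = (\<Sum>a\<in>UNIV. \<Sum>b\<in>UNIV. \<Sum>a'\<in>UNIV. \<Sum>b'\<in>UNIV. W$(a',b)$(a,b') * R$(a',b')$(a,b))"
    by (simp only: mtrace_mult sum_pair ptrans_def vec_lambda_beta fst_conv snd_conv)
  also have "\<dots> = (\<Sum>a\<in>UNIV. \<Sum>b\<in>UNIV. \<Sum>a'\<in>UNIV. \<Sum>b'\<in>UNIV. W$(a,b)$(a',b') * R$(a,b')$(a',b))"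
    by (rule sum_swap13[of "\<lambda>x b y. \<Sum>b'\<in>UNIV. W$(y,b)$(x,b') * R$(y,b')$(x,b)"])
  also have "\<dots> = mtrace (W ** ptrans R)"
    by (simp only: mtrace_mult sum_pair ptrans_def vec_lambda_beta fst_conv snd_conv)
  finally show ?thesis .
qed

lemma ptrans_ptrans: "ptrans (ptrans W) = W"
  by (simp add: ptrans_def vec_eq_iff)

lemma ptrans_realpart: "ptrans (realpart W) = realpart (ptrans W)"
  by (simp add: ptrans_def realpart_comp vec_eq_iff)

lemma herm_ptrans:
  fixes W :: "('m::finite, 'n::finite) bop"
  assumes h: "hermitian W" shows "hermitian (ptrans W)"
  unfolding hermitian_def
proof (intro allI)
  fix r c :: "'m \<times> 'n"
  show "ptrans W $ r $ c = cnj (ptrans W $ c $ r)"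
    using herm_ik[OF h, of "(fst c, snd r)" "(fst r, snd c)"] by (simp add: ptrans_def)
qed

lemma real_ptrans: "real_mat R \<Longrightarrow> real_mat (ptrans R)"
  unfolding real_mat_def ptrans_def by simp

lemma mtrace_ptrans_id: "mtrace (ptrans R) = mtrace R"
  by (simp add: mtrace_def ptrans_def)

lemma herm_realpart:
  assumes h: "hermitian W" shows "hermitian (realpart W)"
  unfolding hermitian_def
proof (intro allI)
  fix i j
  show "realpart W $ i $ j = cnj (realpart W $ j $ i)"
    using herm_ik[OF h, of i j] by (simp add: realpart_comp algebra_simps)
qed

lemma real_realpart: "real_mat (realpart W)"
  unfolding real_mat_def realpart_comp by (simp add: complex_add_cnj)

lemma mtrace_kron: "mtrace (kron A B) = mtrace A * mtrace B"
  by (simp add: mtrace_def kron_def sum_pair sum_product)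

lemma state_kron:
  fixes A :: "complex^'a::finite^'a" and B :: "complex^'b::finite^'b"
  shows "is_state A \<Longrightarrow> is_state B \<Longrightarrow> is_state (kron A B)"
  unfolding is_state_def by (simp add: kron_psd mtrace_kron)

lemma sep_kron:
  fixes A :: "complex^'a::finite^'a" and B :: "complex^'b::finite^'b"
  shows "is_state A \<Longrightarrow> is_state B \<Longrightarrow> separable (kron A B)"
  unfolding separable_def
  by (rule exI[of _ 1], rule exI[of _ "\<lambda>_. 1"], rule exI[of _ "\<lambda>_. A"], rule exI[of _ "\<lambda>_. B"]) simp

definition blockpos :: "('m::finite, 'n::finite) bop \<Rightarrow> bool" where
  "blockpos W \<longleftrightarrow> (\<forall>(A::complex^'m^'m) (B::complex^'n^'n). is_state A \<and> is_state B \<longrightarrow>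
      0 \<le> Re (mtrace (W ** kron A B)))"

lemma witness_blockpos: "ent_witness W \<Longrightarrow> blockpos W"
  unfolding ent_witness_def blockpos_def using state_kron sep_kron by blast

lemma scaleR_comp: "(r *\<^sub>R M) $ j $ i = complex_of_real r * M$j$i"
  by (simp add: complex_eq_iff)

lemma blockpos_sep:
  fixes W :: "('m::finite, 'n::finite) bop"
  assumes bp: "blockpos W" and sep: "separable \<sigma>"
  shows "0 \<le> Re (mtrace (W ** \<sigma>))"
proof -
  obtain K :: nat and p :: "nat \<Rightarrow> real" and A :: "nat \<Rightarrow> complex^'m^'m" and B :: "nat \<Rightarrow> complex^'n^'n"
    where st: "\<forall>k<K. 0 \<le> p k \<and> is_state (A k) \<and> is_state (B k)"
      and sig: "\<sigma> = (\<Sum>k<K. p k *\<^sub>R kron (A k) (B k))"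
    using sep unfolding separable_def by blast
  have "mtrace (W ** \<sigma>) = (\<Sum>i\<in>UNIV. \<Sum>j\<in>UNIV. \<Sum>k<K. complex_of_real (p k) * (W$i$j * kron (A k) (B k) $ j $ i))"
    unfolding sig mtrace_mult by (simp add: sum_distrib_left scaleR_comp mult_ac del: vector_scaleR_component)
  also have "\<dots> = (\<Sum>k<K. \<Sum>i\<in>UNIV. \<Sum>j\<in>UNIV. complex_of_real (p k) * (W$i$j * kron (A k) (B k) $ j $ i))"
    by (rule sum_swap3)
  also have "\<dots> = (\<Sum>k<K. complex_of_real (p k) * mtrace (W ** kron (A k) (B k)))"
    by (simp add: mtrace_mult sum_distrib_left)
  finally have "Re (mtrace (W ** \<sigma>)) = (\<Sum>k<K. p k * Re (mtrace (W ** kron (A k) (B k))))"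
    by simp
  also have "\<dots> \<ge> 0"
    using st bp unfolding blockpos_def by (intro sum_nonneg) auto
  finally show ?thesis .
qed

lemma blockpos_realpart:
  fixes W :: "('m::finite, 'n::finite) bop"
  assumes bp: "blockpos W" shows "blockpos (realpart W)"
  unfolding blockpos_def
proof (intro allI impI)
  fix A :: "complex^'m^'m" and B :: "complex^'n^'n"
  assume s: "is_state A \<and> is_state B"
  hence s2: "is_state (mconj A) \<and> is_state (mconj B)" using state_mconj by (metis)
  show "0 \<le> Re (mtrace (realpart W ** kron A B))"
  proof -
    have "0 \<le> Re (mtrace (W ** kron A B))" "0 \<le> Re (mtrace (W ** kron (mconj A) (mconj B)))"
      using bp s s2 unfolding blockpos_def by blast+
    thus ?thesis unfolding Re_tr_realpart mconj_kron by simp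
  qed
qed

lemma blockpos_ptrans:
  fixes W :: "('m::finite, 'n::finite) bop"
  assumes bp: "blockpos W" shows "blockpos (ptrans W)"
  unfolding blockpos_def
proof (intro allI impI)
  fix A :: "complex^'m^'m" and B :: "complex^'n^'n"
  assume s: "is_state A \<and> is_state B"
  hence h: "hermitian A" unfolding is_state_def psd_def by blast
  have s2: "is_state (mconj A)" using s state_mconj by metis
  show "0 \<le> Re (mtrace (ptrans W ** kron A B))"
  proof -
    have "0 \<le> Re (mtrace (W ** kron (mconj A) B))"
      using bp s s2 unfolding blockpos_def by blast
    thus ?thesis unfolding mtrace_ptrans ptrans_kron[OF h] .
  qed
qed

lemma rank_one:
  fixes v :: "complex^'k::finite"
  assumes nz: "\<exists>i. v$i \<noteq> 0"
  defines "n \<equiv> (\<Sum>i\<in>UNIV. (cmod (v$i))^2)"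
  defines "\<rho> \<equiv> (\<chi> i j. v$i * cnj (v$j) / complex_of_real n)"
  shows "n > 0" "is_state \<rho>" "\<And>X. mtrace (X ** \<rho>) = qf X v v / complex_of_real n"
    "(\<forall>i. v$i \<in> \<real>) \<Longrightarrow> real_mat \<rho>"
proof -
  obtain i0 where i0: "v$i0 \<noteq> 0" using nz by (rule exE)
  have "0 < (cmod (v$i0))^2" using i0 by simp
  also have "\<dots> \<le> n" unfolding n_def
    by (rule member_le_sum) auto
  finally show npos: "n > 0" .
  hence nz': "complex_of_real n \<noteq> 0" by simp
  have sq: "v$i * cnj (v$i) = complex_of_real ((cmod (v$i))^2)" for i
    by (simp only: complex_norm_square)
  have herm: "hermitian \<rho>" unfolding hermitian_def \<rho>_def by simp
  have q: "0 \<le> Re (qf \<rho> x x)" for x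
  proof -
    define s where "s = (\<Sum>i\<in>UNIV. cnj (x$i) * v$i)"
    have "qf \<rho> x x = s * cnj s / complex_of_real n"
      unfolding qf_def \<rho>_def s_def cnj_sum sum_product
      by (simp add: sum_divide_distrib mult_ac)
    also have "s * cnj s = complex_of_real ((cmod s)^2)" by (simp only: complex_norm_square)
    finally have "Re (qf \<rho> x x) = (cmod s)^2 / n"
      by (simp del: of_real_power add: of_real_divide[symmetric] del: of_real_divide)
    thus ?thesis using npos by simp
  qed
  have tr: "mtrace \<rho> = 1"
  proof -
    have "mtrace \<rho> = (\<Sum>i\<in>UNIV. complex_of_real ((cmod (v$i))^2)) / complex_of_real n"
      unfolding mtrace_def \<rho>_def sq[symmetric] by (simp add: sum_divide_distrib)
    also have "\<dots> = 1" using nz' by (simp add: n_def del: of_real_power)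
    finally show ?thesis .
  qed
  show "is_state \<rho>" unfolding is_state_def psd_qf using herm q tr by blast
  show "mtrace (X ** \<rho>) = qf X v v / complex_of_real n" for X
    unfolding mtrace_mult qf_def \<rho>_def
    by (simp add: sum_divide_distrib mult_ac)
  show "(\<forall>i. v$i \<in> \<real>) \<Longrightarrow> real_mat \<rho>"
    unfolding real_mat_def \<rho>_def by (simp add: Reals_cnj_iff)
qed

lemma neg_state:
  fixes X :: "complex^'k::finite^'k"
  assumes neg: "Re (qf X v v) < 0"
  shows "\<exists>\<rho>. is_state \<rho> \<and> Re (mtrace (X ** \<rho>)) < 0 \<and> ((\<forall>i. v$i \<in> \<real>) \<longrightarrow> real_mat \<rho>)"
proof -
  have nz: "\<exists>i. v$i \<noteq> 0"
  proof (rule ccontr)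
    assume "\<not> (\<exists>i. v$i \<noteq> 0)"
    hence "qf X v v = 0" by (simp add: qf_def)
    thus False using neg by simp
  qed
  define n where "n = (\<Sum>i\<in>UNIV. (cmod (v$i))^2)"
  define \<rho> where "\<rho> = (\<chi> i j. v$i * cnj (v$j) / complex_of_real n)"
  have npos: "n > 0" and st: "is_state \<rho>" and tr: "mtrace (X ** \<rho>) = qf X v v / complex_of_real n"
    and re: "(\<forall>i. v$i \<in> \<real>) \<Longrightarrow> real_mat \<rho>"
    using rank_one[OF nz] unfolding n_def \<rho>_def by blast+
  have "Re (mtrace (X ** \<rho>)) = Re (qf X v v) / n" unfolding tr by (simp add: Re_divide_of_real)
  also have "\<dots> < 0" using neg npos by (simp add: divide_neg_pos)
  finally show ?thesis using st re by blast
qed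

lemma detect_ent:
  fixes X :: "('m::finite, 'n::finite) bop"
  assumes bp: "blockpos X" and st: "is_state \<rho>" and neg: "Re (mtrace (X ** \<rho>)) < 0"
  shows "entangled \<rho> \<and> detects X \<rho>"
proof -
  have "\<not> separable \<rho>" using blockpos_sep[OF bp] neg by (meson not_le)
  thus ?thesis using st neg by (simp add: entangled_def detects_def)
qed

lemma witness_intro:
  fixes X :: "('m::finite, 'n::finite) bop"
  assumes "hermitian X" "blockpos X" "entangled \<rho>" "detects X \<rho>"
  shows "ent_witness X"
  unfolding ent_witness_def using assms blockpos_sep by blast

lemma not_psd_neg: "hermitian X \<Longrightarrow> \<not> psd X \<Longrightarrow> \<exists>v. Re (qf X v v) < 0"
  by (auto simp: psd_qf not_le)

lemma psd_no_detect:
  fixes X :: "('m::finite, 'n::finite) bop"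
  assumes "psd X" "is_state \<rho>" shows "\<not> detects X \<rho>"
  using trace_psd[OF assms(1)] assms(2) by (simp add: detects_def is_state_def not_less)

lemma witness_not_psd: "ent_witness W \<Longrightarrow> \<not> psd W"
  unfolding ent_witness_def entangled_def using psd_no_detect by blast

lemma qf_real:
  assumes M: "real_mat M" and a: "\<forall>i. a$i \<in> \<real>" and b: "\<forall>i. b$i \<in> \<real>"
  shows "qf M a b \<in> \<real>"
proof -
  have "cnj (a$i) \<in> \<real>" for i using a Reals_cnj_iff by metis
  thus ?thesis unfolding qf_def using M b unfolding real_mat_def by (intro sum_in_Reals Reals_mult) auto
qed

lemma real_split:
  fixes M :: "complex^'k::finite^'k" and v :: "complex^'k"
  assumes M: "real_mat M"
  defines "u \<equiv> (\<chi> i. complex_of_real (Re (v$i)))" and "w \<equiv> (\<chi> i. complex_of_real (Im (v$i)))"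
  shows "Re (qf M v v) = Re (qf M u u) + Re (qf M w w)"
proof -
  have v: "v = (\<chi> i. u$i + \<i> * w$i)" by (simp add: u_def w_def vec_eq_iff complex_eq_iff)
  have ur: "\<forall>i. u$i \<in> \<real>" and wr: "\<forall>i. w$i \<in> \<real>" by (simp_all add: u_def w_def)
  have r1: "Im (qf M u w) = 0" using qf_real[OF M ur wr] by (simp add: complex_is_Real_iff)
  have r2: "Im (qf M w u) = 0" using qf_real[OF M wr ur] by (simp add: complex_is_Real_iff)
  have E: "qf M v v = qf M u u + \<i> * qf M u w + cnj \<i> * (qf M w u + \<i> * qf M w w)"
    unfolding v by (simp only: qf_lin_left qf_lin_right) (simp add: algebra_simps)
  have "Re (qf M v v) = Re (qf M u u) - Im (qf M u w) + Im (qf M w u) + Re (qf M w w)"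
    unfolding E by simp
  thus ?thesis using r1 r2 by simp
qed

lemma K1:
  fixes X :: "('m::finite, 'n::finite) bop"
  assumes h: "hermitian X" and bp: "blockpos X" and np: "\<not> psd (realpart X)"
  shows "detects_real_ent X"
proof -
  obtain v where v: "Re (qf (realpart X) v v) < 0" using not_psd_neg[OF herm_realpart[OF h] np] by blast
  define u :: "complex^('m\<times>'n)" where "u = (\<chi> i. complex_of_real (Re (v$i)))"
  define w :: "complex^('m\<times>'n)" where "w = (\<chi> i. complex_of_real (Im (v$i)))"
  have "Re (qf (realpart X) v v) = Re (qf (realpart X) u u) + Re (qf (realpart X) w w)"
    unfolding u_def w_def by (rule real_split[OF real_realpart])
  hence "Re (qf (realpart X) u u) < 0 \<or> Re (qf (realpart X) w w) < 0" using v by linarith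
  moreover have "\<forall>i. u$i \<in> \<real>" "\<forall>i. w$i \<in> \<real>" by (simp_all add: u_def w_def)
  ultimately have "\<exists>y. (\<forall>i. y$i \<in> \<real>) \<and> Re (qf (realpart X) y y) < 0" by blast
  then obtain y where yr: "\<forall>i. y$i \<in> \<real>" and yn: "Re (qf (realpart X) y y) < 0" by blast
  obtain \<rho> where st: "is_state \<rho>" and neg: "Re (mtrace (realpart X ** \<rho>)) < 0" and re: "real_mat \<rho>"
    using neg_state[OF yn] yr by blast
  have "Re (mtrace (X ** \<rho>)) < 0" using neg realpart_real_tr[OF re] by simp
  thus ?thesis using detect_ent[OF bp st] re unfolding detects_real_ent_def by blast
qed

lemma K2:
  fixes X :: "('m::finite, 'n::finite) bop"
  assumes p: "psd (realpart X)"
  shows "\<not> detects_real_ent X"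
proof
  assume "detects_real_ent X"
  then obtain \<rho> where re: "real_mat \<rho>" and en: "entangled \<rho>" and d: "detects X \<rho>"
    unfolding detects_real_ent_def by blast
  have "is_state \<rho>" using en by (simp add: entangled_def)
  hence "\<not> detects (realpart X) \<rho>" using psd_no_detect[OF p] by blast
  thus False using d realpart_real_tr[OF re] by (simp add: detects_def)
qed

lemma K12:
  fixes X :: "('m::finite, 'n::finite) bop"
  assumes "hermitian X" "blockpos X"
  shows "psd (realpart X) \<longleftrightarrow> \<not> detects_real_ent X"
  using K1[OF assms] K2 by blast

lemma K3:
  fixes X :: "('m::finite, 'n::finite) bop"
  assumes h: "hermitian X" and bp: "blockpos X"
  shows "ent_witness (realpart X) \<longleftrightarrow> detects_real_ent X"
proof
  assume "ent_witness (realpart X)"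
  then obtain \<rho> where "entangled \<rho>" "detects (realpart X) \<rho>" unfolding ent_witness_def by blast
  hence "\<not> psd (realpart X)" using psd_no_detect unfolding entangled_def by blast
  thus "detects_real_ent X" using K1[OF h bp] by blast
next
  assume "detects_real_ent X"
  then obtain \<rho> where re: "real_mat \<rho>" and en: "entangled \<rho>" and d: "detects X \<rho>"
    unfolding detects_real_ent_def by blast
  have "detects (realpart X) \<rho>" using d realpart_real_tr[OF re] by (simp add: detects_def)
  thus "ent_witness (realpart X)"
    using witness_intro[OF herm_realpart[OF h] blockpos_realpart[OF bp] en] by blast
qed

lemma K4:
  fixes X :: "('m::finite, 'n::finite) bop"
  assumes h: "hermitian X" and bp: "blockpos X"
  shows "psd X \<or> ent_witness X"
proof (cases "psd X")
  case True thus ?thesis by simp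
next
  case False
  then obtain v where "Re (qf X v v) < 0" using not_psd_neg[OF h] by blast
  then obtain \<rho> where st: "is_state \<rho>" and neg: "Re (mtrace (X ** \<rho>)) < 0"
    using neg_state by blast
  show ?thesis using detect_ent[OF bp st neg] witness_intro[OF h bp] by blast
qed

lemma dre_witness:
  fixes X :: "('m::finite, 'n::finite) bop"
  assumes h: "hermitian X" and bp: "blockpos X" and d: "detects_real_ent X"
  shows "ent_witness X"
  using d witness_intro[OF h bp] unfolding detects_real_ent_def by blast

theorem corollary1:
  fixes W :: "('m::finite, 'n::finite) bop"
  assumes "ent_witness W"
  shows "(ent_witness (realpart W) \<or> psd (realpart W))
    \<and> (ent_witness (realpart W) \<longleftrightarrow> detects_real_ent W)
    \<and> (PPT (realpart W) \<longleftrightarrow>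
         \<not> detects_real_ent W \<and>
         (NPT (ptrans W) \<or> (ent_witness (ptrans W) \<and> \<not> detects_real_ent (ptrans W))))
    \<and> (NPT (realpart W) \<longleftrightarrow>
         \<not> detects_real_ent W \<and> ent_witness (ptrans W) \<and> detects_real_ent (ptrans W))
    \<and> (NPT (realpart W) \<longrightarrow>
         (\<forall>\<rho>. real_mat \<rho> \<and> entangled \<rho> \<and> detects (ptrans W) \<rho> \<longrightarrow> NPT \<rho>))"
proof -
  have hW: "hermitian W" using assms by (simp add: ent_witness_def)
  have bW: "blockpos W" using assms by (rule witness_blockpos)
  have hG: "hermitian (ptrans W)" using hW by (rule herm_ptrans)
  have bG: "blockpos (ptrans W)" using bW by (rule blockpos_ptrans)
  have nW: "\<not> psd W" using assms by (rule witness_not_psd)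
  have psdP: "psd (realpart W) \<longleftrightarrow> \<not> detects_real_ent W" by (rule K12[OF hW bW])
  have psdPG: "psd (ptrans (realpart W)) \<longleftrightarrow> \<not> detects_real_ent (ptrans W)"
    unfolding ptrans_realpart by (rule K12[OF hG bG])
  have wP: "ent_witness (realpart W) \<longleftrightarrow> detects_real_ent W" by (rule K3[OF hW bW])
  have NG: "NPT (ptrans W) \<longleftrightarrow> psd (ptrans W)" using nW by (simp add: NPT_def ptrans_ptrans)
  have G4: "psd (ptrans W) \<or> ent_witness (ptrans W)" by (rule K4[OF hG bG])
  have G5: "psd (ptrans W) \<Longrightarrow> \<not> detects_real_ent (ptrans W)"
    using psd_no_detect unfolding detects_real_ent_def entangled_def by blast
  have G6: "detects_real_ent (ptrans W) \<Longrightarrow> ent_witness (ptrans W)" by (rule dre_witness[OF hG bG])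
  have c5: "NPT (realpart W) \<longrightarrow>
         (\<forall>\<rho>. real_mat \<rho> \<and> entangled \<rho> \<and> detects (ptrans W) \<rho> \<longrightarrow> NPT \<rho>)"
  proof (intro impI allI)
    fix \<rho> :: "('m, 'n) bop"
    assume np: "NPT (realpart W)" and asm: "real_mat \<rho> \<and> entangled \<rho> \<and> detects (ptrans W) \<rho>"
    have pP: "psd (realpart W)" using np by (simp add: NPT_def)
    have st: "is_state \<rho>" using asm by (simp add: entangled_def)
    have re: "real_mat \<rho>" using asm by simp
    show "NPT \<rho>" unfolding NPT_def
    proof
      show "psd \<rho>" using st by (simp add: is_state_def)
      show "\<not> psd (ptrans \<rho>)"
      proof
        assume pt: "psd (ptrans \<rho>)"
        have "0 \<le> Re (mtrace (realpart W ** ptrans \<rho>))" by (rule trace_psd[OF pP pt])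
        also have "\<dots> = Re (mtrace (W ** ptrans \<rho>))" by (rule realpart_real_tr[OF real_ptrans[OF re]])
        also have "\<dots> = Re (mtrace (ptrans W ** \<rho>))" by (simp add: mtrace_ptrans)
        finally show False using asm by (simp add: detects_def)
      qed
    qed
  qed
  have NP: "NPT (realpart W) \<longleftrightarrow> psd (realpart W) \<and> \<not> psd (ptrans (realpart W))"
    by (simp add: NPT_def)
  have PP: "PPT (realpart W) \<longleftrightarrow> psd (realpart W) \<and> psd (ptrans (realpart W))"
    by (simp add: PPT_def)
  show ?thesis
    using psdP psdPG wP NG G4 G5 G6 c5 NP PP by blast
qed

end
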